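(* Let $F_1,F_2:[0,1]\to[0,1]$ be homeomorphisms and let $0<a<1$ be such that $0,a,1$ are fixed points of both $F_1$ and $F_2$, and $F_1(t)>t$ and $F_2(t)>t$ for all $t\in[0,1]\setminus\{0,a,1\}$. Let $f_1,f_2:S^1\to S^1$ be the homeomorphisms of the circle induced by $F_1,F_2$ (via the identification $S^1=[0,1]/(0\sim1)$). Then the iterated function system $\mathcal{F}=\{S^1; f_\lambda\mid \lambda\in\{1,2\}\}$ does not have the average shadowing property.
   Context: The circle $S^1$ is identified with $[0,1)$ via the covering projection $\pi:\mathbb{R}\to S^1$, $\pi(x)=x \bmod 1$, and carries the metric $d$ induced by the usual distance on the real line (arc-length distance). An iterated function system (IFS) $\mathcal{F}=\{X; f_{\lambda}\mid\lambda\in\Lambda\}$ on a metric space $(X,d)$ is a family of continuous maps $f_\lambda:X\to X$ indexed by a finite nonempty set $\Lambda$. For $\sigma=(\lambda_0,\lambda_1,\dots)\in\Lambda^{\mathbb{Z}_+}$ write $\mathcal{F}_{\sigma_n}=f_{\lambda_{n-1}}\circ\cdots\circ f_{\lambda_0}$ for $n\ge1$ and $\mathcal{F}_{\sigma_0}=\mathrm{id}_X$. For $\delta>0$, a sequence $(x_i)_{i\ge0}$ in $X$ is a $\delta$-average pseudo-orbit of $\mathcal{F}$ if there exist a natural number $N$ and $\sigma=(\lambda_0,\lambda_1,\dots)\in\Lambda^{\mathbb{Z}_+}$ such that for all $n\ge N$, $\frac1n\sum_{i=0}^{n-1}d(f_{\lambda_i}(x_i),x_{i+1})<\delta$. A sequence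 $(x_i)_{i\ge0}$ is $\epsilon$-shadowed in average by $z\in X$ if there exists $\sigma\in\Lambda^{\mathbb{Z}_+}$ with $\limsup_{n\to\infty}\frac1n\sum_{i=0}^{n-1}d(\mathcal{F}_{\sigma_i}(z),x_i)<\epsilon$. $\mathcal{F}$ has the average shadowing property if for every $\epsilon>0$ there is $\delta>0$ such that every $\delta$-average pseudo-orbit of $\mathcal{F}$ is $\epsilon$-shadowed in average by some point of $X$. *)

theory Defs
  imports "HOL-Analysis.Analysis" "HOL-Library.Liminf_Limsup"
begin

primrec IFS_iter :: "('l \<Rightarrow> 'a \<Rightarrow> 'a) \<Rightarrow> (nat \<Rightarrow> 'l) \<Rightarrow> nat \<Rightarrow> 'a \<Rightarrow> 'a" where
  "IFS_iter f \<sigma> 0 z = z"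
| "IFS_iter f \<sigma> (Suc n) z = f (\<sigma> n) (IFS_iter f \<sigma> n z)"

definition avg_pseudo_orbit ::
  "'a set \<Rightarrow> ('a \<Rightarrow> 'a \<Rightarrow> real) \<Rightarrow> 'l set \<Rightarrow> ('l \<Rightarrow> 'a \<Rightarrow> 'a) \<Rightarrow> real \<Rightarrow> (nat \<Rightarrow> 'a) \<Rightarrow> bool" where
  "avg_pseudo_orbit X d L f \<delta> xs \<longleftrightarrow>
     (\<forall>i. xs i \<in> X) \<and>
     (\<exists>N::nat. \<exists>\<sigma>::nat \<Rightarrow> 'l. (\<forall>i. \<sigma> i \<in> L) \<and>
        (\<forall>n\<ge>N. (1 / real n) * (\<Sum>i<n. d (f (\<sigma> i) (xs i)) (xs (Suc i))) < \<delta>))"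

definition avg_shadowed ::
  "'a set \<Rightarrow> ('a \<Rightarrow> 'a \<Rightarrow> real) \<Rightarrow> 'l set \<Rightarrow> ('l \<Rightarrow> 'a \<Rightarrow> 'a) \<Rightarrow> real \<Rightarrow> (nat \<Rightarrow> 'a) \<Rightarrow> 'a \<Rightarrow> bool" where
  "avg_shadowed X d L f \<epsilon> xs z \<longleftrightarrow>
     (\<exists>\<sigma>::nat \<Rightarrow> 'l. (\<forall>i. \<sigma> i \<in> L) \<and>
        limsup (\<lambda>n. ereal ((1 / real n) * (\<Sum>i<n. d (IFS_iter f \<sigma> i z) (xs i)))) < ereal \<epsilon>)"

definition has_avg_shadowing ::
  "'a set \<Rightarrow> ('a \<Rightarrow> 'a \<Rightarrow> real) \<Rightarrow> 'l set \<Rightarrow> ('l \<Rightarrow> 'a \<Rightarrow> 'a) \<Rightarrow> bool" where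
  "has_avg_shadowing X d L f \<longleftrightarrow>
     (\<forall>\<epsilon>>0. \<exists>\<delta>>0. \<forall>xs. avg_pseudo_orbit X d L f \<delta> xs \<longrightarrow>
        (\<exists>z\<in>X. avg_shadowed X d L f \<epsilon> xs z))"

text \<open>The circle S^1 is identified with [0,1) with the arc-length metric.\<close>

definition S1 :: "real set" where
  "S1 = {0..<1}"

definition circle_dist :: "real \<Rightarrow> real \<Rightarrow> real" where
  "circle_dist x y = min \<bar>x - y\<bar> (1 - \<bar>x - y\<bar>)"

text \<open>The circle map induced by F : [0,1] -> [0,1] via S^1 = [0,1]/(0~1):
  a point x of [0,1) is sent to F x taken mod 1 (so the value 1 is identified with 0).\<close>

definition circle_map :: "(real \<Rightarrow> real) \<Rightarrow> real \<Rightarrow> real" where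
  "circle_map F x = frac (F x)"

end

theory Submission
  imports Defs
begin

lemma cd_sym: "circle_dist x y = circle_dist y x"
  unfolding circle_dist_def by (simp add: abs_minus_commute)

lemma cd_self: "circle_dist x x = 0"
  unfolding circle_dist_def by simp

lemma cd_tri:
  assumes "x \<in> {0..<1}" "y \<in> {0..<1}" "w \<in> {0..<1}"
  shows "circle_dist x w \<le> circle_dist x y + circle_dist y w"
  using assms unfolding circle_dist_def by (auto simp: min_def abs_if)

lemma cd_nonneg:
  assumes "x \<in> {0..<1}" "y \<in> {0..<1}"
  shows "circle_dist x y \<ge> 0"
  using assms unfolding circle_dist_def by (auto simp: min_def abs_if)

lemma hom_props:
  fixes F G :: "real \<Rightarrow> real"
  assumes h: "homeomorphism {0..1} {0..1} F G" and F0: "F 0 = 0"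
    and pq: "0 \<le> p" "p < q" "q \<le> 1" and Fq: "F q = q"
    and ab: "\<And>t. t \<in> {p<..<q} \<Longrightarrow> F t > t"
    and t: "t \<in> {p<..<q}"
  shows "F t \<in> {p<..<q} \<and> F t > t"
proof -
  have cont: "continuous_on {0..1} F" using h homeomorphism_def by blast
  have inv: "\<And>x. x\<in>{0..1} \<Longrightarrow> G (F x) = x" using h by (simp add: homeomorphism_def)
  have gt: "F t > t" using ab t by blast
  have "F t < q"
  proof (rule ccontr)
    assume "\<not> F t < q"
    then have "F 0 \<le> q" "q \<le> F t" using F0 pq by (auto simp: not_less)
    moreover have "0 \<le> t" using t pq by auto
    moreover have "continuous_on {0..t} F" using cont t pq
      by (auto intro: continuous_on_subset)
    ultimately obtain s where s: "0 \<le> s" "s \<le> t" "F s = q" using IVT'[of F 0 q t] by blast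
    then have "G (F s) = G (F q)" by (simp add: Fq)
    moreover have "s \<in> {0..1}" "q \<in> {0..1}" using s t pq by auto
    ultimately have "s = q" using inv by metis
    thus False using s t by auto
  qed
  thus ?thesis using gt t by auto
qed

lemma circle_map_eq:
  assumes h: "homeomorphism {0..1} {0..1} F G" and F1: "F 1 = 1" and x: "x \<in> {0..<1}"
  shows "circle_map F x = F x \<and> F x \<in> {0..<1}"
proof -
  have inv: "\<And>x. x\<in>{0..1} \<Longrightarrow> G (F x) = x" using h by (simp add: homeomorphism_def)
  have img: "F x \<in> {0..1}" using h x unfolding homeomorphism_def by auto
  have "F x \<noteq> 1"
  proof
    assume "F x = 1"
    then have "G (F x) = G (F 1)" using F1 by simp
    then have "x = 1" using inv x by auto
    thus False using x by auto
  qed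
  then have "F x \<in> {0..<1}" using img by auto
  thus ?thesis unfolding circle_map_def using frac_eq by auto
qed

lemma climb:
  fixes zs :: "nat \<Rightarrow> real" and H1 H2 :: "real \<Rightarrow> real"
  assumes c1: "continuous_on {p..q} H1" and c2: "continuous_on {p..q} H2"
    and P1: "\<And>t. t\<in>{p<..<q} \<Longrightarrow> H1 t \<in> {p<..<q} \<and> H1 t > t"
    and P2: "\<And>t. t\<in>{p<..<q} \<Longrightarrow> H2 t \<in> {p<..<q} \<and> H2 t > t"
    and z0: "zs 0 \<in> {p<..<q}"
    and st: "\<And>i. zs i \<in> {p<..<q} \<Longrightarrow> zs (Suc i) = H1 (zs i) \<or> zs (Suc i) = H2 (zs i)"
    and eta: "\<eta> > 0"
  shows "\<exists>K. \<forall>i\<ge>K. q - \<eta> < zs i \<and> zs i < q"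
proof -
  have inI: "zs i \<in> {p<..<q}" for i
  proof (induction i)
    case 0 then show ?case using z0 by simp
  next
    case (Suc i) then show ?case using st[OF Suc] P1 P2 by auto
  qed
  have step: "zs i < zs (Suc i)" for i using inI[of i] st[OF inI[of i]] P1 P2 by fastforce
  have mono: "i \<le> j \<Longrightarrow> zs i \<le> zs j" for i j
    using lift_Suc_mono_le[of zs] step less_imp_le by metis
  have "\<exists>K. q - \<eta> < zs K"
  proof (rule ccontr)
    assume nK: "\<not> ?thesis"
    hence le: "zs i \<le> q - \<eta>" for i by (simp add: not_less)
    let ?K = "{zs 0..q-\<eta>}"
    have Ksub: "?K \<subseteq> {p<..<q}" using z0 eta by auto
    have ne: "?K \<noteq> {}" using le[of 0] by auto
    define h where "h t = min (H1 t - t) (H2 t - t)" for t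
    have Ksub2: "?K \<subseteq> {p..q}" using Ksub by auto
    have hc: "continuous_on ?K h" unfolding h_def
      by (intro continuous_intros continuous_on_subset[OF c1 Ksub2] continuous_on_subset[OF c2 Ksub2])
    obtain m where m: "m \<in> ?K" "\<And>y. y\<in>?K \<Longrightarrow> h m \<le> h y"
      using continuous_attains_inf[OF compact_Icc ne hc] by blast
    have "m \<in> {p<..<q}" using m(1) Ksub by blast
    then have cpos: "h m > 0" using P1 P2 unfolding h_def by fastforce
    have inc: "zs (Suc i) - zs i \<ge> h m" for i
    proof -
      have "zs i \<in> ?K" using mono[of 0 i] le[of i] by auto
      then have "h m \<le> h (zs i)" using m(2) by blast
      moreover have "h (zs i) \<le> zs (Suc i) - zs i" using st[OF inI[of i]] unfolding h_def by auto
      ultimately show ?thesis by linarith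
    qed
    have lin: "zs i \<ge> zs 0 + real i * h m" for i
    proof (induction i)
      case 0 then show ?case by simp
    next
      case (Suc i) then show ?case using inc[of i] by (simp add: algebra_simps)
    qed
    obtain n :: nat where n: "q - p < real n * h m" using cpos reals_Archimedean3 by blast
    then have "zs n > q" using lin[of n] inI[of 0] by auto
    thus False using inI[of n] by auto
  qed
  then obtain K where K: "q - \<eta> < zs K" by blast
  show ?thesis
  proof (intro exI allI impI)
    fix i assume "K \<le> i"
    then show "q - \<eta> < zs i \<and> zs i < q" using mono[of K i] K inI[of i] by auto
  qed
qed

lemma block_sum:
  fixes M :: nat and u v :: real
  assumes M: "M > 0"
  shows "(\<Sum>i<M*j. (if even (i div M) then u else v)) = (\<Sum>k<j. real M * (if even k then u else v))"
proof (induction j)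
  case 0 show ?case by simp
next
  case (Suc j)
  have split: "{..<M*Suc j} = {..<M*j} \<union> {M*j..<M*j+M}" by auto
  have "(\<Sum>i\<in>{M*j..<M*j+M}. (if even (i div M) then u else v))
      = (\<Sum>i\<in>{M*j..<M*j+M}. (if even j then u else v))"
  proof (rule sum.cong[OF refl])
    fix i assume "i \<in> {M*j..<M*j+M}"
    hence "i div M = j" by (intro div_nat_eqI) auto
    thus "(if even (i div M) then u else v) = (if even j then u else v)" by simp
  qed
  also have "\<dots> = real M * (if even j then u else v)" by simp
  finally have b: "(\<Sum>i\<in>{M*j..<M*j+M}. (if even (i div M) then u else v)) = real M * (if even j then u else v)" .
  have "(\<Sum>i<M*Suc j. (if even (i div M) then u else v))
      = (\<Sum>i<M*j. (if even (i div M) then u else v)) + (\<Sum>i\<in>{M*j..<M*j+M}. (if even (i div M) then u else v))"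
    unfolding split by (rule sum.union_disjoint) auto
  then show ?case using Suc b by simp
qed

lemma pair_sum:
  fixes c u v :: real
  shows "(\<Sum>j<2*k. c * (if even j then u else v)) = real k * c * (u + v)"
  by (induction k) (simp_all add: algebra_simps)


theorem mainTheorem5:
  fixes F1 F2 :: "real \<Rightarrow> real" and a :: real
  assumes hom1: "\<exists>G. homeomorphism {0..1} {0..1} F1 G"
    and hom2: "\<exists>G. homeomorphism {0..1} {0..1} F2 G"
    and a: "0 < a" "a < 1"
    and fix1: "F1 0 = 0" "F1 a = a" "F1 1 = 1"
    and fix2: "F2 0 = 0" "F2 a = a" "F2 1 = 1"
    and above1: "\<And>t. t \<in> {0..1} - {0, a, 1} \<Longrightarrow> F1 t > t"
    and above2: "\<And>t. t \<in> {0..1} - {0, a, 1} \<Longrightarrow> F2 t > t"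
  shows "\<not> has_avg_shadowing S1 circle_dist {1::nat, 2}
           (\<lambda>l. if l = 1 then circle_map F1 else circle_map F2)"
proof
  assume H: "has_avg_shadowing S1 circle_dist {1::nat, 2}
           (\<lambda>l. if l = 1 then circle_map F1 else circle_map F2)"
  define f where "f = (\<lambda>l::nat. if l = 1 then circle_map F1 else circle_map F2)"
  obtain G1 where G1: "homeomorphism {0..1} {0..1} F1 G1" using hom1 by blast
  obtain G2 where G2: "homeomorphism {0..1} {0..1} F2 G2" using hom2 by blast
  define D where "D = min a (1-a)"
  have Dpos: "D > 0" using a by (simp add: D_def)
  have d0a: "circle_dist 0 a = D" "circle_dist a 0 = D"
    using a by (auto simp: circle_dist_def D_def)
  have cm0: "circle_map F1 0 = 0" "circle_map F2 0 = 0"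
    using fix1 fix2 by (auto simp: circle_map_def)
  have cma: "circle_map F1 a = a" "circle_map F2 a = a"
    using fix1 fix2 a by (auto simp: circle_map_def frac_eq)
  from H have "\<exists>\<delta>>0. \<forall>xs. avg_pseudo_orbit S1 circle_dist {1,2} f \<delta> xs \<longrightarrow>
        (\<exists>z\<in>S1. avg_shadowed S1 circle_dist {1,2} f (D/4) xs z)"
    unfolding has_avg_shadowing_def f_def using Dpos by auto
  then obtain \<delta> where \<delta>: "\<delta> > 0"
    "\<And>xs. avg_pseudo_orbit S1 circle_dist {1,2} f \<delta> xs \<Longrightarrow> \<exists>z\<in>S1. avg_shadowed S1 circle_dist {1,2} f (D/4) xs z"
    by blast
  obtain M :: nat where M: "D / \<delta> < real M" using reals_Archimedean2 by blast
  have Mpos: "M > 0" using M Dpos \<delta>(1)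
    by (metis divide_pos_pos gr0I not_less_iff_gr_or_eq of_nat_0)
  define xs where "xs i = (if even (i div M) then 0 else a)" for i
  have xsS: "xs i \<in> {0..<1}" for i using a by (simp add: xs_def)
  have fx: "f 1 (xs i) = xs i" for i using cm0 cma by (simp add: f_def xs_def)
  have err: "circle_dist (f 1 (xs i)) (xs (Suc i)) \<le> D * (real (Suc i div M) - real (i div M))" for i
  proof (cases "Suc i div M = i div M")
    case True
    then have "xs (Suc i) = xs i" by (simp add: xs_def)
    then show ?thesis using fx True by (simp add: cd_self)
  next
    case False
    have "i div M \<le> Suc i div M" by (simp add: div_le_mono)
    with False have "real (Suc i div M) - real (i div M) \<ge> 1" by linarith
    moreover have "circle_dist (f 1 (xs i)) (xs (Suc i)) \<le> D"
      unfolding fx using d0a Dpos by (auto simp: xs_def cd_self)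
    ultimately show ?thesis using Dpos
      by (smt (verit) mult_le_cancel_left1)
  qed
  have "avg_pseudo_orbit S1 circle_dist {1,2} f \<delta> xs"
    unfolding avg_pseudo_orbit_def
  proof (rule conjI)
    show "\<forall>i. xs i \<in> S1" using xsS by (simp add: S1_def)
  next
    show "\<exists>N. \<exists>\<sigma>::nat\<Rightarrow>nat. (\<forall>i. \<sigma> i \<in> {1,2}) \<and>
        (\<forall>n\<ge>N. (1 / real n) * (\<Sum>i<n. circle_dist (f (\<sigma> i) (xs i)) (xs (Suc i))) < \<delta>)"
    proof (intro exI[of _ "0::nat"] exI[of _ "\<lambda>_. 1::nat"] conjI allI impI)
    fix i :: nat show "(1::nat) \<in> {1,2}" by simp
  next
    fix n :: nat assume "n \<ge> 0"
    have "(\<Sum>i<n. circle_dist (f ((\<lambda>_. 1::nat) i) (xs i)) (xs (Suc i)))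
        \<le> (\<Sum>i<n. D * (real (Suc i div M) - real (i div M)))"
      by (rule sum_mono) (use err in simp)
    also have "\<dots> = D * real (n div M)"
      by (simp add: sum_distrib_left[symmetric] sum_lessThan_telescope[of "\<lambda>i. real (i div M)"])
    finally have S: "(\<Sum>i<n. circle_dist (f ((\<lambda>_. 1::nat) i) (xs i)) (xs (Suc i))) \<le> D * real (n div M)" .
    show "1 / real n * (\<Sum>i<n. circle_dist (f ((\<lambda>_. 1::nat) i) (xs i)) (xs (Suc i))) < \<delta>"
    proof (cases "n = 0")
      case True then show ?thesis using \<delta> by simp
    next
      case False
      have "real M * real (n div M) \<le> real n"
        by (metis of_nat_le_iff of_nat_mult times_div_less_eq_dividend)
      then have "real (n div M) \<le> real n / real M" using Mpos by (simp add: field_simps)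
      then have DD: "D * real (n div M) \<le> D * (real n / real M)" using Dpos by (intro mult_left_mono) auto
      have "1 / real n * (\<Sum>i<n. circle_dist (f ((\<lambda>_. 1::nat) i) (xs i)) (xs (Suc i)))
           \<le> 1 / real n * (D * (real n / real M))"
        by (intro mult_left_mono order_trans[OF S DD]) auto
      also have "\<dots> = D / real M" using False by simp
      also have "\<dots> < \<delta>" using M Mpos \<delta>(1) by (simp add: field_simps)
      finally show ?thesis .
    qed
  qed
  qed
  then obtain z where z: "z \<in> S1" "avg_shadowed S1 circle_dist {1,2} f (D/4) xs z"
    using \<delta>(2) by blast
  then obtain \<sigma> where \<sigma>: "\<forall>i. \<sigma> i \<in> {1::nat,2}"
    "limsup (\<lambda>n. ereal ((1 / real n) * (\<Sum>i<n. circle_dist (IFS_iter f \<sigma> i z) (xs i)))) < ereal (D/4)"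
    unfolding avg_shadowed_def by blast
  define zs where "zs i = IFS_iter f \<sigma> i z" for i
  have zsS: "zs (Suc i) = circle_map F1 (zs i) \<or> zs (Suc i) = circle_map F2 (zs i)" for i
    by (simp add: zs_def f_def)
  have zs0: "zs 0 = z" by (simp add: zs_def)
  have zin: "zs i \<in> {0..<1}" for i
  proof (induction i)
    case 0 then show ?case using z(1) zs0 by (simp add: S1_def)
  next
    case (Suc i) then show ?case using zsS[of i] circle_map_eq[OF G1 fix1(3)] circle_map_eq[OF G2 fix2(3)]
      by metis
  qed
  have target: "\<exists>t\<in>{0,a}. \<exists>K. \<forall>i\<ge>K. circle_dist (zs i) t < D/8"
  proof -
    have eta: "D/8 > 0" using Dpos by simp
    have c1: "continuous_on {0..1} F1" using G1 homeomorphism_def by blast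
    have c2: "continuous_on {0..1} F2" using G2 homeomorphism_def by blast
    consider "z = 0" | "z = a" | "0 < z \<and> z < a" | "a < z \<and> z < 1"
      using z(1) unfolding S1_def by force
    then show ?thesis
    proof cases
      case 1
      have "zs i = 0" for i
      proof (induction i)
        case 0 then show ?case using zs0 1 by simp
      next
        case (Suc i) then show ?case using zsS[of i] cm0 by auto
      qed
      then show ?thesis by (auto simp: cd_self Dpos)
    next
      case 2
      have "zs i = a" for i
      proof (induction i)
        case 0 then show ?case using zs0 2 by simp
      next
        case (Suc i) then show ?case using zsS[of i] cma by auto
      qed
      then show ?thesis using Dpos by (auto simp: cd_self)
    next
      case 3
      have "\<exists>K. \<forall>i\<ge>K. a - D/8 < zs i \<and> zs i < a"
      proof (rule climb[of 0 a F1 F2])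
        show "continuous_on {0..a} F1" using c1 a by (auto intro: continuous_on_subset)
        show "continuous_on {0..a} F2" using c2 a by (auto intro: continuous_on_subset)
        fix t assume t: "t \<in> {0<..<a}"
        show "F1 t \<in> {0<..<a} \<and> t < F1 t"
          using hom_props[OF G1 fix1(1), of 0 a t] a above1 t fix1 by auto
        show "F2 t \<in> {0<..<a} \<and> t < F2 t"
          using hom_props[OF G2 fix2(1), of 0 a t] a above2 t fix2 by auto
      next
        show "zs 0 \<in> {0<..<a}" using 3 zs0 by auto
        show "D/8 > 0" by (rule eta)
        fix i assume "zs i \<in> {0<..<a}"
        then have "zs i \<in> {0..<1}" using a by auto
        then show "zs (Suc i) = F1 (zs i) \<or> zs (Suc i) = F2 (zs i)"
          using zsS[of i] circle_map_eq[OF G1 fix1(3)] circle_map_eq[OF G2 fix2(3)] by metis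
      qed
      then obtain K where K: "\<forall>i\<ge>K. a - D/8 < zs i \<and> zs i < a" by blast
      have "\<forall>i\<ge>K. circle_dist (zs i) a < D/8"
        using K unfolding circle_dist_def by (auto simp: min_def abs_if)
      then show ?thesis by blast
    next
      case 4
      have "\<exists>K. \<forall>i\<ge>K. 1 - D/8 < zs i \<and> zs i < 1"
      proof (rule climb[of a 1 F1 F2])
        show "continuous_on {a..1} F1" using c1 a by (auto intro: continuous_on_subset)
        show "continuous_on {a..1} F2" using c2 a by (auto intro: continuous_on_subset)
        fix t assume t: "t \<in> {a<..<1}"
        show "F1 t \<in> {a<..<1} \<and> t < F1 t"
          using hom_props[OF G1 fix1(1), of a 1 t] a above1 t fix1 by auto
        show "F2 t \<in> {a<..<1} \<and> t < F2 t"
          using hom_props[OF G2 fix2(1), of a 1 t] a above2 t fix2 by auto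
      next
        show "zs 0 \<in> {a<..<1}" using 4 zs0 by auto
        show "D/8 > 0" by (rule eta)
        fix i assume "zs i \<in> {a<..<1}"
        then have "zs i \<in> {0..<1}" using a by auto
        then show "zs (Suc i) = F1 (zs i) \<or> zs (Suc i) = F2 (zs i)"
          using zsS[of i] circle_map_eq[OF G1 fix1(3)] circle_map_eq[OF G2 fix2(3)] by metis
      qed
      then obtain K where K: "\<forall>i\<ge>K. 1 - D/8 < zs i \<and> zs i < 1" by blast
      have "\<forall>i\<ge>K. circle_dist (zs i) 0 < D/8"
        using K Dpos unfolding circle_dist_def by (auto simp: min_def abs_if)
      then show ?thesis by blast
    qed
  qed
  then obtain t K where t: "t \<in> {0,a}" and K: "\<And>i. i \<ge> K \<Longrightarrow> circle_dist (zs i) t < D/8"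
    by blast
  have tin: "t \<in> {0..<1}" using t a by auto
  define avg where "avg n = (1 / real n) * (\<Sum>i<n. circle_dist (zs i) (xs i))" for n
  have "eventually (\<lambda>n. ereal (avg n) < ereal (D/4)) sequentially"
    using Limsup_lessD[OF \<sigma>(2)] unfolding avg_def zs_def by simp
  then obtain N0 where N0: "\<And>n. n \<ge> N0 \<Longrightarrow> avg n < D/4"
    by (auto simp: eventually_sequentially)
  define k where "k = max (4*K+1) N0"
  define n where "n = M * (2*k)"
  have twok: "2*k \<le> n"
  proof -
    have "k \<le> M*k" using Mpos by simp
    thus ?thesis by (simp add: n_def)
  qed
  have kn: "real n \<ge> 2 * real k"
    using twok of_nat_le_iff[of "2*k" n, where 'a=real] by simp
  have kge: "N0 \<le> k" "K \<le> k" unfolding k_def by auto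
  have nN0: "n \<ge> N0" using twok kge by linarith
  have nK: "n \<ge> K" using twok kge by linarith
  have dtx: "circle_dist t (xs i) = (if even (i div M) then circle_dist t 0 else circle_dist t a)" for i
    by (simp add: xs_def)
  have uv: "circle_dist t 0 + circle_dist t a = D" using t d0a by (auto simp: cd_self)
  have dtxD: "circle_dist t (xs i) \<le> D" for i using t d0a Dpos by (auto simp: xs_def cd_self)
  have pt: "circle_dist (zs i) (xs i) \<ge> circle_dist t (xs i) - D/8 - (if i < K then D else 0)" for i
  proof (cases "i < K")
    case True
    then show ?thesis using dtxD[of i] cd_nonneg[OF zin xsS, of i i] Dpos by simp
  next
    case False
    have "circle_dist t (xs i) \<le> circle_dist t (zs i) + circle_dist (zs i) (xs i)"
      by (rule cd_tri[OF tin zin xsS])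
    then show ?thesis using K[of i] False cd_sym[of t "zs i"] by simp
  qed
  have sumK: "(\<Sum>i<n. (if i < K then D else 0)) = real K * D"
  proof -
    have "(\<Sum>i<n. (if i < K then D else 0)) = (\<Sum>i\<in>{..<n} \<inter> {i. i < K}. D)"
      by (simp add: sum.If_cases)
    also have "{..<n} \<inter> {i. i < K} = {..<K}" using nK by auto
    finally show ?thesis by simp
  qed
  have sumT: "(\<Sum>i<n. circle_dist t (xs i)) = real k * real M * D"
    unfolding dtx n_def block_sum[OF Mpos] pair_sum uv by simp
  have "(\<Sum>i<n. circle_dist (zs i) (xs i)) \<ge> (\<Sum>i<n. circle_dist t (xs i) - D/8 - (if i < K then D else 0))"
    by (rule sum_mono) (rule pt)
  also have "(\<Sum>i<n. circle_dist t (xs i) - D/8 - (if i < K then D else 0))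
      = real k * real M * D - real n * (D/8) - real K * D"
    by (simp add: sum_subtractf sumK sumT)
  finally have S: "(\<Sum>i<n. circle_dist (zs i) (xs i)) \<ge> real k * real M * D - real n * (D/8) - real K * D" .
  have npos: "real n > 0" using Mpos by (simp add: n_def k_def)
  have nk: "real n = 2 * real k * real M" by (simp add: n_def)
  have "4*K+1 \<le> k" unfolding k_def by simp
  then have "8*K \<le> n" using twok by linarith
  then have Kk: "8 * real K \<le> real n" using of_nat_le_iff[of "8*K" n, where 'a=real] by simp
  have "avg n \<ge> D/4"
  proof -
    have "real n * (D/4) \<le> real k * real M * D - real n * (D/8) - real K * D"
    proof -
      have e1: "real k * real M * D = real n * (D/2)" using nk by simp
      have e2: "real K * D \<le> real n * (D/8)" using mult_right_mono[OF Kk, of "D/8"] Dpos by simp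
      show ?thesis using e1 e2 by linarith
    qed
    then have "real n * (D/4) \<le> (\<Sum>i<n. circle_dist (zs i) (xs i))" using S by linarith
    then show ?thesis unfolding avg_def using npos by (simp add: field_simps)
  qed
  then show False using N0[OF nN0] by simp
qed

end
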